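(* Let $p\in(0,1)$, $\gamma>0$, $B>0$, $w,N\in\mathbb{N}$, and let $(\xi_1^{(N)*},\dots,\xi_N^{(N)*})$ be the unique maximizer of $\mathcal{T}_N$. Then its effective length is $N$, i.e. $\xi_N^{(N)*}>0$.
   Context: Logarithms are base 2. For an admissible (nonnegative, with sum at most $B$) sequence $(x_j)_{j\ge1}$, $$\mathcal{T}_\infty(x_1,x_2,\dots)=\sum_{k=1}^{w}p^2(1-p)^{k-1}\frac{k}{2}\log_2\!\Big(1+\gamma\frac{B}{k}\Big)+\sum_{j=1}^{\infty}p(1-p)^{j+w-1}\frac12\log_2(1+\gamma x_j)+\sum_{k=1}^{\infty}p^2(1-p)^{k+w-1}\frac{w}{2}\log_2\!\Big(1+\gamma\frac{B-\sum_{j=1}^{k}x_j}{w}\Big).$$ For $N\in\mathbb{N}$ and $\xi_1,\dots,\xi_N\ge0$ with $\sum_{j=1}^N\xi_j\le B$, define $\mathcal{T}_N(\xi_1,\dots,\xi_N)=\mathcal{T}_\infty(\xi_1,\dots,\xi_N,0,0,\dots)$. $\mathcal{T}_N$ has a unique maximizer over this compact set, denoted $(\xi_j^{(N)*})_{j=1}^N$. The effective length of a finite sequence is the largest index $J$ with $\xi_J>0$ (all later entries being zero). *)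

theory Defs
  imports "HOL-Analysis.Analysis"
begin

text \<open>Sequences are functions nat => real indexed from 1 (the value at 0 is ignored).\<close>

definition T_inf :: "real \<Rightarrow> real \<Rightarrow> real \<Rightarrow> nat \<Rightarrow> (nat \<Rightarrow> real) \<Rightarrow> real" where
  "T_inf p \<gamma> B w x =
     (\<Sum>k=1..w. p^2 * (1-p)^(k-1) * (real k / 2) * log 2 (1 + \<gamma> * B / real k))
   + (\<Sum>i. p * (1-p)^(Suc i + w - 1) * (1/2) * log 2 (1 + \<gamma> * x (Suc i)))
   + (\<Sum>i. p^2 * (1-p)^(Suc i + w - 1) * (real w / 2)
            * log 2 (1 + \<gamma> * (B - (\<Sum>j=1..Suc i. x j)) / real w))"

definition T_N :: "real \<Rightarrow> real \<Rightarrow> real \<Rightarrow> nat \<Rightarrow> nat \<Rightarrow> (nat \<Rightarrow> real) \<Rightarrow> real" where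
  "T_N p \<gamma> B w N \<xi> = T_inf p \<gamma> B w (\<lambda>j. if j \<le> N then \<xi> j else 0)"

definition feasible_N :: "real \<Rightarrow> nat \<Rightarrow> (nat \<Rightarrow> real) \<Rightarrow> bool" where
  "feasible_N B N \<xi> \<longleftrightarrow> (\<forall>j\<in>{1..N}. \<xi> j \<ge> 0) \<and> (\<Sum>j=1..N. \<xi> j) \<le> B"

end

theory Submission
  imports Defs
begin

lemma sum_trunc:
  fixes n N :: nat
  shows "(\<Sum>j=1..n. (if j \<le> N then \<xi> j else (0::real))) = (\<Sum>j=1..min n N. \<xi> j)"
proof -
  have "(\<Sum>j=1..n. (if j \<le> N then \<xi> j else (0::real))) = (\<Sum>j\<in>{j\<in>{1..n}. j \<le> N}. \<xi> j)"
    by (subst sum.inter_filter) auto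
  also have "{j\<in>{1..n}. j \<le> N} = {1..min n N}" by auto
  finally show ?thesis .
qed

lemma TN_closed:
  fixes p \<gamma> B :: real and w N :: nat and \<xi> :: "nat \<Rightarrow> real"
  assumes "0<p" "p<1" "w\<ge>1" "N\<ge>1"
  shows "T_N p \<gamma> B w N \<xi> = (\<Sum>k=1..w. p^2 * (1-p)^(k-1) * (real k / 2) * log 2 (1 + \<gamma> * B / real k))
     + (\<Sum>j=1..N. p * (1-p)^(j + w - 1) * (1/2) * log 2 (1 + \<gamma> * \<xi> j))
     + (\<Sum>k=1..N-1. p^2 * (1-p)^(k + w - 1) * (real w / 2) * log 2 (1 + \<gamma> * (B - (\<Sum>j=1..k. \<xi> j)) / real w))
     + p * (1-p)^(N + w - 1) * (real w / 2) * log 2 (1 + \<gamma> * (B - (\<Sum>j=1..N. \<xi> j)) / real w)"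
proof -
  define x where "x = (\<lambda>j. if j \<le> N then \<xi> j else 0)"
  have sx: "\<And>n. (\<Sum>j=1..n. x j) = (\<Sum>j=1..min n N. \<xi> j)" unfolding x_def by (rule sum_trunc)
  define F where "F i = p * (1-p)^(Suc i + w - 1) * (1/2) * log 2 (1 + \<gamma> * x (Suc i))" for i
  have s2: "(\<Sum>i. F i) = (\<Sum>j=1..N. p * (1-p)^(j + w - 1) * (1/2) * log 2 (1 + \<gamma> * \<xi> j))"
  proof -
    have "(\<Sum>i. F i) = (\<Sum>i<N. F i)"
      by (rule suminf_finite) (auto simp: F_def x_def)
    also have "\<dots> = (\<Sum>i<N. p * (1-p)^(Suc i + w - 1) * (1/2) * log 2 (1 + \<gamma> * \<xi> (Suc i)))"
      by (rule sum.cong) (auto simp: F_def x_def)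
    also have "\<dots> = (\<Sum>j=1..N. p * (1-p)^(j + w - 1) * (1/2) * log 2 (1 + \<gamma> * \<xi> j))"
      by (rule sum_bounds_lt_plus1)
    finally show ?thesis .
  qed
  define H where "H i = p^2 * (1-p)^(Suc i + w - 1) * (real w / 2)
            * log 2 (1 + \<gamma> * (B - (\<Sum>j=1..Suc i. x j)) / real w)" for i
  define G where "G = log 2 (1 + \<gamma> * (B - (\<Sum>j=1..N. \<xi> j)) / real w)"
  define c where "c = p^2 * (1-p)^(N+w-1) * (real w / 2) * G"
  have shift: "H (i + (N-1)) = c * (1-p)^i" for i
  proof -
    have "min (Suc (i + (N-1))) N = N" using assms by auto
    moreover have "Suc (i + (N-1)) + w - 1 = (N + w - 1) + i" using assms by auto
    hence e: "(1-p)^(Suc (i + (N-1)) + w - 1) = (1-p)^(N+w-1) * (1-p)^i"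
      by (simp only: power_add[symmetric])
    show ?thesis unfolding H_def c_def G_def sx e \<open>min (Suc (i + (N-1))) N = N\<close> by simp
  qed
  have gs: "summable (\<lambda>i. c * (1-p)^i)"
    by (rule summable_mult) (rule summable_geometric, use assms in auto)
  have sumH: "summable H"
  proof -
    have "summable (\<lambda>i. H (i + (N-1)))" using gs shift by simp
    thus ?thesis using summable_iff_shift[of H "N-1"] by simp
  qed
  have s3: "(\<Sum>i. H i) = (\<Sum>k=1..N-1. p^2 * (1-p)^(k + w - 1) * (real w / 2) * log 2 (1 + \<gamma> * (B - (\<Sum>j=1..k. \<xi> j)) / real w))
     + p * (1-p)^(N + w - 1) * (real w / 2) * G"
  proof -
    have "(\<Sum>i. H i) = (\<Sum>n. H (n + (N-1))) + (\<Sum>i<N-1. H i)"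
      by (rule suminf_split_initial_segment[OF sumH])
    also have "(\<Sum>n. H (n + (N-1))) = c * (1 / (1 - (1-p)))"
      unfolding shift by (subst suminf_mult) (use assms in \<open>auto simp: suminf_geometric\<close>)
    also have "c * (1 / (1 - (1-p))) = p * (1-p)^(N + w - 1) * (real w / 2) * G"
      unfolding c_def using assms by (simp add: power2_eq_square)
    also have "(\<Sum>i<N-1. H i) = (\<Sum>i<N-1. p^2 * (1-p)^(Suc i + w - 1) * (real w / 2) * log 2 (1 + \<gamma> * (B - (\<Sum>j=1..Suc i. \<xi> j)) / real w))"
      unfolding H_def sx by (rule sum.cong) (auto simp: min_def)
    also have "\<dots> = (\<Sum>k=1..N-1. p^2 * (1-p)^(k + w - 1) * (real w / 2) * log 2 (1 + \<gamma> * (B - (\<Sum>j=1..k. \<xi> j)) / real w))"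
      by (rule sum_bounds_lt_plus1)
    finally show ?thesis by simp
  qed
  show ?thesis
    unfolding T_N_def T_inf_def x_def[symmetric] F_def[symmetric] H_def[symmetric] s2 s3 G_def by simp
qed

lemma dlog:
  fixes \<alpha> \<beta> :: real
  assumes "\<alpha> > 0"
  shows "((\<lambda>e. log 2 (\<alpha> + \<beta> * e)) has_real_derivative \<beta> / (\<alpha> * ln 2)) (at 0)"
proof -
  have d1: "((\<lambda>e. \<alpha> + \<beta> * e) has_real_derivative \<beta>) (at 0)"
    by (auto intro!: derivative_eq_intros)
  have d2: "DERIV (\<lambda>y. log 2 y) (\<alpha> + \<beta> * 0) :> 1 / (ln 2 * (\<alpha> + \<beta> * 0))"
    using assms by (intro DERIV_log) simp
  from DERIV_chain'[OF d1 d2] show ?thesis by (simp add: mult.commute)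
qed

lemma geo_sum:
  fixes q :: real
  shows "m \<le> Suc n \<Longrightarrow> (\<Sum>k=m..n. (1-q) * q^k) = q^m - q^Suc n"
proof (induction n)
  case 0
  then show ?case by (cases m) auto
next
  case (Suc n)
  show ?case
  proof (cases "m = Suc (Suc n)")
    case True
    then show ?thesis by simp
  next
    case False
    then have "m \<le> Suc n" using Suc.prems by simp
    then have "(\<Sum>k=m..Suc n. (1-q) * q^k) = (\<Sum>k=m..n. (1-q) * q^k) + (1-q) * q^Suc n"
      by (simp add: sum.cl_ivl_Suc)
    also have "\<dots> = q^m - q^Suc n + (1-q) * q^Suc n" using Suc.IH \<open>m \<le> Suc n\<close> by simp
    finally show ?thesis by (simp add: algebra_simps)
  qed
qed

lemma S_const:
  fixes \<xi> :: "nat \<Rightarrow> real"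
  assumes "\<forall>j. m < j \<and> j \<le> n \<longrightarrow> \<xi> j = 0"
  shows "m \<le> k \<Longrightarrow> k \<le> n \<Longrightarrow> (\<Sum>j=1..k. \<xi> j) = (\<Sum>j=1..m. \<xi> j)"
proof (induction k)
  case 0
  then show ?case by simp
next
  case (Suc k)
  show ?case
  proof (cases "m = Suc k")
    case True
    then show ?thesis by simp
  next
    case False
    then have "m \<le> k" using Suc.prems by simp
    have "(\<Sum>j=1..Suc k. \<xi> j) = (\<Sum>j=1..k. \<xi> j) + \<xi> (Suc k)" by (simp add: sum.cl_ivl_Suc)
    also have "\<xi> (Suc k) = 0" using assms Suc.prems \<open>m \<le> k\<close> by auto
    finally show ?thesis using Suc.IH \<open>m \<le> k\<close> Suc.prems by simp
  qed
qed

theorem lemma3: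
  fixes p \<gamma> B :: real and w N :: nat and \<xi> :: "nat \<Rightarrow> real"
  assumes "0 < p" "p < 1" "\<gamma> > 0" "B > 0" "w \<ge> 1" "N \<ge> 1"
    and "feasible_N B N \<xi>"
    and "\<forall>\<eta>. feasible_N B N \<eta> \<longrightarrow> T_N p \<gamma> B w N \<eta> \<le> T_N p \<gamma> B w N \<xi>"
  shows "\<xi> N > 0"
proof (rule ccontr)
  assume neg: "\<not> \<xi> N > 0"
  have feas: "\<forall>j\<in>{1..N}. \<xi> j \<ge> 0" "(\<Sum>j=1..N. \<xi> j) \<le> B"
    using assms(7) unfolding feasible_N_def by auto
  have xN: "\<xi> N = 0" using neg feas(1) assms(6) by force
  have wpos: "real w > 0" using assms(5) by simp
  define a where "a j = p * (1-p)^(j + w - 1) * (1/2)" for j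
  define b where "b k = p^2 * (1-p)^(k + w - 1) * (real w / 2)" for k
  define f where "f v = log 2 (1 + \<gamma> * v)" for v
  define g where "g v = log 2 (1 + \<gamma> * v / real w)" for v
  define S where "S \<eta> k = (\<Sum>j=1..k. \<eta> j)" for \<eta> :: "nat \<Rightarrow> real" and k
  define C where "C = (\<Sum>k=1..w. p^2 * (1-p)^(k-1) * (real k / 2) * log 2 (1 + \<gamma> * B / real k))"
  define c where "c = real w * a N"
  have cf: "T_N p \<gamma> B w N \<eta> = C + (\<Sum>j=1..N. a j * f (\<eta> j)) + (\<Sum>k=1..N-1. b k * g (B - S \<eta> k)) + c * g (B - S \<eta> N)" for \<eta>
    using TN_closed[OF assms(1,2,5,6), of \<gamma> B \<eta>] unfolding a_def b_def f_def g_def S_def c_def C_def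
    by (simp add: mult_ac)
  have better: "feasible_N B N \<eta> \<Longrightarrow> T_N p \<gamma> B w N \<eta> \<le> T_N p \<gamma> B w N \<xi>" for \<eta>
    using assms(8) by blast
  have feasI: "feasible_N B N \<eta>" if "\<forall>j\<in>{1..N}. \<eta> j \<ge> 0" "S \<eta> N \<le> B" for \<eta>
    using that unfolding feasible_N_def S_def by auto
  obtain M where N: "N = Suc M" using assms(6) by (cases N) auto
  have SN: "S \<eta> N = S \<eta> M + \<eta> N" for \<eta> unfolding S_def N by (simp add: sum.cl_ivl_Suc)
  define R where "R = B - S \<xi> M"
  have R0: "R \<ge> 0" using feas(2) SN[of \<xi>] xN unfolding R_def S_def by simp
  have f0: "f 0 = 0" "g 0 = 0" by (simp_all add: f_def g_def)
  have aNpos: "a N > 0" unfolding a_def using assms(1,2) by simp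
  show False
  proof (cases "R > 0")
    case True
    define \<eta> where "\<eta> e = (\<lambda>j. \<xi> j + (if j = N then e else 0))" for e
    define \<psi> where "\<psi> e = a N * log 2 (1 + \<gamma> * e) + c * log 2 ((1 + \<gamma>*R/w) + (-\<gamma>/w) * e)" for e
    define K where "K = C + (\<Sum>j=1..N. a j * f (\<xi> j)) + (\<Sum>k=1..N-1. b k * g (B - S \<xi> k))"
    have S\<eta>: "S (\<eta> e) k = S \<xi> k" if "k \<le> M" for e k
      unfolding S_def \<eta>_def using that N by (intro sum.cong) auto
    have S\<eta>N: "S (\<eta> e) N = S \<xi> M + e" for e
      using SN[of "\<eta> e"] S\<eta>[of M e] xN unfolding \<eta>_def by simp
    have T: "T_N p \<gamma> B w N (\<eta> e) = K + \<psi> e" for e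
    proof -
      have "(\<Sum>j=1..N. a j * f (\<eta> e j)) = (\<Sum>j=1..N. a j * f (\<xi> j) + (if j = N then a N * f e else 0))"
        by (rule sum.cong) (auto simp: \<eta>_def xN f0)
      also have "\<dots> = (\<Sum>j=1..N. a j * f (\<xi> j)) + a N * f e"
        using assms(6) by (simp add: sum.distrib)
      finally have s1: "(\<Sum>j=1..N. a j * f (\<eta> e j)) = (\<Sum>j=1..N. a j * f (\<xi> j)) + a N * f e" .
      have s2: "(\<Sum>k=1..N-1. b k * g (B - S (\<eta> e) k)) = (\<Sum>k=1..N-1. b k * g (B - S \<xi> k))"
        by (rule sum.cong) (auto simp: S\<eta> N)
      have s3: "g (B - S (\<eta> e) N) = log 2 ((1 + \<gamma>*R/w) + (-\<gamma>/w) * e)"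
        unfolding g_def S\<eta>N R_def using wpos by (intro arg_cong[where f="log 2"]) (simp add: field_simps)
      show ?thesis unfolding cf s1 s2 s3 K_def \<psi>_def by (simp add: f_def)
    qed
    have T0: "T_N p \<gamma> B w N \<xi> = K + \<psi> 0"
    proof -
      have "\<eta> 0 = \<xi>" unfolding \<eta>_def by auto
      then show ?thesis using T[of 0] by simp
    qed
    have xpos: "1 + \<gamma>*R/w > 1" using True assms(3) wpos by simp
    have D: "DERIV \<psi> 0 :> a N * (\<gamma> / (1 * ln 2)) + c * ((-\<gamma>/w) / ((1 + \<gamma>*R/w) * ln 2))"
    proof -
      have d1: "((\<lambda>e. log 2 (1 + \<gamma> * e)) has_real_derivative \<gamma> / (1 * ln 2)) (at 0)"
        by (rule dlog) simp
      have d2: "((\<lambda>e. log 2 ((1 + \<gamma>*R/w) + (-\<gamma>/w) * e)) has_real_derivative (-\<gamma>/w) / ((1 + \<gamma>*R/w) * ln 2)) (at 0)"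
        by (rule dlog) (use xpos in simp)
      show ?thesis unfolding \<psi>_def by (rule DERIV_add[OF DERIV_cmult[OF d1] DERIV_cmult[OF d2]])
    qed
    have Dpos: "a N * (\<gamma> / (1 * ln 2)) + c * ((-\<gamma>/w) / ((1 + \<gamma>*R/w) * ln 2)) > 0"
    proof -
      have e1: "c * ((-\<gamma>/w) / ((1 + \<gamma>*R/w) * ln 2)) = - (a N * \<gamma> / ln 2) / (1 + \<gamma>*R/w)"
        unfolding c_def using wpos xpos by (simp add: field_simps)
      have "(a N * \<gamma> / ln 2) / (1 + \<gamma>*R/w) < a N * \<gamma> / ln 2"
        using xpos aNpos assms(3) by (simp add: divide_less_eq)
      then show ?thesis unfolding e1 by simp
    qed
    obtain d where d: "d > 0" "\<forall>h>0. h < d \<longrightarrow> \<psi> 0 < \<psi> (0 + h)"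
      using DERIV_pos_inc_right[OF D Dpos] by blast
    define e where "e = min (d/2) R"
    have e: "e > 0" "e < d" "e \<le> R" unfolding e_def using d True by auto
    have "feasible_N B N (\<eta> e)"
    proof (rule feasI)
      show "\<forall>j\<in>{1..N}. 0 \<le> \<eta> e j" using feas(1) e unfolding \<eta>_def by auto
      show "S (\<eta> e) N \<le> B" unfolding S\<eta>N using e unfolding R_def by simp
    qed
    then have "K + \<psi> e \<le> K + \<psi> 0" using better T T0 by metis
    moreover have "\<psi> 0 < \<psi> e" using d e by auto
    ultimately show False by simp
  next
    case False
    have SM: "S \<xi> M = B" using R0 False unfolding R_def by simp
    define MS where "MS = {j\<in>{1..M}. \<xi> j > 0}"
    have finMS: "finite MS" unfolding MS_def by simp
    have MSne: "MS \<noteq> {}"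
    proof
      assume "MS = {}"
      then have "\<forall>j\<in>{1..M}. \<xi> j \<le> 0" unfolding MS_def by auto
      then have "S \<xi> M \<le> 0" unfolding S_def by (intro sum_nonpos) auto
      then show False using SM assms(4) by simp
    qed
    define m where "m = Max MS"
    have mMS: "m \<in> MS" unfolding m_def using finMS MSne by (rule Max_in)
    then have m1: "1 \<le> m" "m \<le> M" "\<xi> m > 0" unfolding MS_def by auto
    have mN: "m \<noteq> N" "m < N" using m1 N by auto
    have after: "\<forall>j. m < j \<and> j \<le> M \<longrightarrow> \<xi> j = 0"
    proof (intro allI impI)
      fix j assume j: "m < j \<and> j \<le> M"
      have "\<xi> j \<ge> 0" using feas(1) j m1 N by auto
      moreover have "\<not> \<xi> j > 0"
      proof
        assume "\<xi> j > 0"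
        then have "j \<in> MS" unfolding MS_def using j m1 by auto
        then have "j \<le> m" unfolding m_def using finMS by simp
        then show False using j by simp
      qed
      ultimately show "\<xi> j = 0" by simp
    qed
    have Sm: "S \<xi> k = B" if "m \<le> k" "k \<le> M" for k
      using S_const[OF after, of k] S_const[OF after, of M] that m1 SM unfolding S_def by simp
    define \<eta> where "\<eta> e = (\<lambda>j. \<xi> j + (if j = N then e else 0) - (if j = m then e else 0))" for e
    have S\<eta>: "S (\<eta> e) k = S \<xi> k - (if m \<le> k then e else 0)" if "k \<le> M" for e k
    proof -
      have "S (\<eta> e) k = S \<xi> k + (\<Sum>j=1..k. (if j = N then e else 0)) - (\<Sum>j=1..k. (if j = m then e else 0))"
        unfolding S_def \<eta>_def by (simp add: sum.distrib sum_subtractf)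
      then show ?thesis using that N m1 by simp
    qed
    have S\<eta>N: "S (\<eta> e) N = S \<xi> N" for e
      using SN[of "\<eta> e"] SN[of \<xi>] S\<eta>[of M e] xN mN m1 unfolding \<eta>_def by simp
    define Bs where "Bs = (\<Sum>k=m..M. b k)"
    have Bs: "Bs = real w * (a m - a N)"
    proof -
      have bk: "b k = (p*(1-p)^(w-1)*(real w/2)) * ((1-(1-p)) * (1-p)^k)" for k
      proof -
        have "(1-p)^(k + w - 1) = (1-p)^k * (1-p)^(w-1)"
          using assms(5) by (simp add: power_add[symmetric])
        then show ?thesis unfolding b_def by (simp add: power2_eq_square)
      qed
      have ak: "a k = (p*(1-p)^(w-1)*(1/2)) * (1-p)^k" for k
      proof -
        have "(1-p)^(k + w - 1) = (1-p)^k * (1-p)^(w-1)"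
          using assms(5) by (simp add: power_add[symmetric])
        then show ?thesis unfolding a_def by simp
      qed
      have "Bs = (p*(1-p)^(w-1)*(real w/2)) * (\<Sum>k=m..M. (1-(1-p)) * (1-p)^k)"
        unfolding Bs_def bk by (simp add: sum_distrib_left)
      also have "(\<Sum>k=m..M. (1-(1-p)) * (1-p)^k) = (1-p)^m - (1-p)^N"
        unfolding N by (rule geo_sum) (use m1 in simp)
      finally show ?thesis unfolding ak by (simp add: algebra_simps)
    qed
    define \<psi> where "\<psi> e = a N * log 2 (1 + \<gamma> * e) + a m * log 2 ((1 + \<gamma> * \<xi> m) + (-\<gamma>) * e)
        + Bs * log 2 (1 + (\<gamma>/w) * e)" for e
    define K where "K = C + ((\<Sum>j=1..N. a j * f (\<xi> j)) - a m * f (\<xi> m)) + (\<Sum>k=1..N-1. b k * g (B - S \<xi> k)) + c * g (B - S \<xi> N)"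
    have T: "T_N p \<gamma> B w N (\<eta> e) = K + \<psi> e" for e
    proof -
      have "(\<Sum>j=1..N. a j * f (\<eta> e j)) = (\<Sum>j=1..N. a j * f (\<xi> j) + (if j = N then a N * f e else 0)
          + (if j = m then a m * (f (\<xi> m - e) - f (\<xi> m)) else 0))"
        by (rule sum.cong) (use mN in \<open>auto simp: \<eta>_def xN f0 algebra_simps\<close>)
      also have "\<dots> = (\<Sum>j=1..N. a j * f (\<xi> j)) + a N * f e + a m * (f (\<xi> m - e) - f (\<xi> m))"
        using assms(6) m1 mN by (simp add: sum.distrib)
      finally have s1: "(\<Sum>j=1..N. a j * f (\<eta> e j)) = (\<Sum>j=1..N. a j * f (\<xi> j)) + a N * f e + a m * (f (\<xi> m - e) - f (\<xi> m))" .
      have "(\<Sum>k=1..N-1. b k * g (B - S (\<eta> e) k)) = (\<Sum>k=1..M. b k * g (B - S \<xi> k) + (if m \<le> k then b k * g e else 0))"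
        unfolding N by (rule sum.cong) (auto simp: S\<eta> Sm f0)
      also have "\<dots> = (\<Sum>k=1..M. b k * g (B - S \<xi> k)) + (\<Sum>k=1..M. (if m \<le> k then b k * g e else 0))"
        by (simp add: sum.distrib)
      also have "(\<Sum>k=1..M. (if m \<le> k then b k * g e else 0)) = (\<Sum>k\<in>{k\<in>{1..M}. m \<le> k}. b k * g e)"
        by (subst sum.inter_filter) auto
      also have "{k\<in>{1..M}. m \<le> k} = {m..M}" using m1 by auto
      also have "(\<Sum>k\<in>{m..M}. b k * g e) = Bs * g e" unfolding Bs_def by (simp add: sum_distrib_right)
      finally have s2: "(\<Sum>k=1..N-1. b k * g (B - S (\<eta> e) k)) = (\<Sum>k=1..N-1. b k * g (B - S \<xi> k)) + Bs * g e"
        unfolding N by simp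
      have e1: "f (\<xi> m - e) = log 2 ((1 + \<gamma> * \<xi> m) + (-\<gamma>) * e)" unfolding f_def
        by (intro arg_cong[where f="log 2"]) (simp add: algebra_simps)
      have e2: "g e = log 2 (1 + (\<gamma>/w) * e)" unfolding g_def by simp
      show ?thesis unfolding cf s1 s2 S\<eta>N K_def \<psi>_def e1 e2 by (simp add: f_def algebra_simps)
    qed
    have T0: "T_N p \<gamma> B w N \<xi> = K + \<psi> 0"
    proof -
      have "\<eta> 0 = \<xi>" unfolding \<eta>_def by auto
      then show ?thesis using T[of 0] by simp
    qed
    have xpos: "1 + \<gamma> * \<xi> m > 1" using m1 assms(3) by simp
    have D: "DERIV \<psi> 0 :> a N * (\<gamma> / (1 * ln 2)) + a m * ((-\<gamma>) / ((1 + \<gamma> * \<xi> m) * ln 2)) + Bs * ((\<gamma>/w) / (1 * ln 2))"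
    proof -
      have d1: "((\<lambda>e. log 2 (1 + \<gamma> * e)) has_real_derivative \<gamma> / (1 * ln 2)) (at 0)"
        by (rule dlog) simp
      have d2: "((\<lambda>e. log 2 ((1 + \<gamma> * \<xi> m) + (-\<gamma>) * e)) has_real_derivative (-\<gamma>) / ((1 + \<gamma> * \<xi> m) * ln 2)) (at 0)"
        by (rule dlog) (use xpos in simp)
      have d3: "((\<lambda>e. log 2 (1 + (\<gamma>/w) * e)) has_real_derivative (\<gamma>/w) / (1 * ln 2)) (at 0)"
        by (rule dlog) simp
      show ?thesis unfolding \<psi>_def
        by (rule DERIV_add[OF DERIV_add[OF DERIV_cmult[OF d1] DERIV_cmult[OF d2]] DERIV_cmult[OF d3]])
    qed
    have ampos: "a m > 0" unfolding a_def using assms(1,2) by simp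
    have Dpos: "a N * (\<gamma> / (1 * ln 2)) + a m * ((-\<gamma>) / ((1 + \<gamma> * \<xi> m) * ln 2)) + Bs * ((\<gamma>/w) / (1 * ln 2)) > 0"
    proof -
      have e1: "Bs * ((\<gamma>/w) / (1 * ln 2)) = a m * \<gamma> / ln 2 - a N * \<gamma> / ln 2"
        unfolding Bs using wpos by (simp add: field_simps)
      have e2: "a m * ((-\<gamma>) / ((1 + \<gamma> * \<xi> m) * ln 2)) = - (a m * \<gamma> / ln 2) / (1 + \<gamma> * \<xi> m)"
        using xpos by (simp add: field_simps)
      have "(a m * \<gamma> / ln 2) / (1 + \<gamma> * \<xi> m) < a m * \<gamma> / ln 2"
        using xpos ampos assms(3) by (simp add: divide_less_eq)
      then show ?thesis unfolding e1 e2 by simp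
    qed
    obtain d where d: "d > 0" "\<forall>h>0. h < d \<longrightarrow> \<psi> 0 < \<psi> (0 + h)"
      using DERIV_pos_inc_right[OF D Dpos] by blast
    define e where "e = min (d/2) (\<xi> m)"
    have e: "e > 0" "e < d" "e \<le> \<xi> m" unfolding e_def using d m1 by auto
    have "feasible_N B N (\<eta> e)"
    proof (rule feasI)
      show "\<forall>j\<in>{1..N}. 0 \<le> \<eta> e j" using feas(1) e mN unfolding \<eta>_def by auto
      show "S (\<eta> e) N \<le> B" unfolding S\<eta>N using feas(2) unfolding S_def by simp
    qed
    then have "K + \<psi> e \<le> K + \<psi> 0" using better T T0 by metis
    moreover have "\<psi> 0 < \<psi> e" using d e by auto
    ultimately show False by simp
  qed
qed

end
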